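(* Let $D\subset\mathbb R^3$ be an arbitrary nonempty bounded open set and $B,B'$ open balls with $[\overline B\cup\overline{B'}]\cap\overline D=\emptyset$. Then there exist positive constants $C,\tau_0$, independent of $\tau$, such that for all $\tau\ge\tau_0$, $J(\tau;f,g)>0$ and $$J(\tau;f,g)\ge C\tau^2\int_Ddx\int_{B\times B'}e^{-\tau\phi(x;y,y')}\,dy\,dy'.$$
   Context: $f=\chi_B$, $g=\chi_{B'}$; for $h\in L^2$, $v_h(x)=\frac1{4\pi}\int\frac{e^{-\tau|x-y|}}{|x-y|}h(y)dy$; $J(\tau;f,g)=\int_D(\nabla v_f\cdot\nabla v_g+\tau^2v_fv_g)dx$; $\phi(x;y,y')=|y-x|+|x-y'|$; $[F]$ is the convex hull of $F$. *)

theory Defs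
  imports "HOL-Analysis.Analysis"
begin

definition vpot :: "real \<Rightarrow> (real^3 \<Rightarrow> real) \<Rightarrow> real^3 \<Rightarrow> real" where
  "vpot \<tau> h x = (1 / (4 * pi)) *
     (LINT y|lborel. exp (- \<tau> * dist x y) / dist x y * h y)"

definition grad :: "(real^3 \<Rightarrow> real) \<Rightarrow> real^3 \<Rightarrow> real^3" where
  "grad v x = (\<chi> i. frechet_derivative v (at x) (axis i 1))"

definition Jfun :: "real \<Rightarrow> (real^3) set \<Rightarrow> (real^3 \<Rightarrow> real) \<Rightarrow> (real^3 \<Rightarrow> real) \<Rightarrow> real" where
  "Jfun \<tau> D f g = (LINT x:D|lborel.
      grad (vpot \<tau> f) x \<bullet> grad (vpot \<tau> g) x + \<tau>\<^sup>2 * vpot \<tau> f x * vpot \<tau> g x)"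

definition phi :: "real^3 \<Rightarrow> real^3 \<Rightarrow> real^3 \<Rightarrow> real" where
  "phi x y y' = dist y x + dist x y'"

end

theory Submission
  imports Defs
begin


lemma cont_set_integrable:
  fixes f :: "'a::euclidean_space \<Rightarrow> real"
  assumes "compact S" "continuous_on S f" "A \<subseteq> S" "A \<in> sets lborel"
  shows "set_integrable lborel A f"
proof -
  have "set_integrable lborel S f"
    using borel_integrable_compact[OF assms(1,2)] unfolding set_integrable_def by simp
  then show ?thesis using set_integrable_subset assms(3,4) by blast
qed

lemma cont_param:
  fixes f :: "'a::metric_space \<Rightarrow> 'b::euclidean_space \<Rightarrow> real"
  assumes T: "compact T" and S: "compact S" and c: "continuous_on (T \<times> S) (\<lambda>(t,s). f t s)"
    and A: "A \<subseteq> S" "A \<in> sets lborel"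
  shows "continuous_on T (\<lambda>t. LINT s:A|lborel. f t s)"
proof -
  have uc: "uniformly_continuous_on (T \<times> S) (\<lambda>(t,s). f t s)"
    using compact_uniformly_continuous[OF c] compact_Times[OF T S] by blast
  have fin: "emeasure lborel A \<noteq> \<infinity>"
  proof -
    have "bounded A" using bounded_subset[OF compact_imp_bounded[OF S] A(1)] .
    then show ?thesis using emeasure_bounded_finite[of A] by auto
  qed
  have int: "set_integrable lborel A (f t)" if "t \<in> T" for t
  proof (rule cont_set_integrable[OF S _ A])
    show "continuous_on S (f t)"
    proof -
      have c1: "continuous_on S (\<lambda>s. (t, s))" by (intro continuous_intros)
      have "(\<lambda>s. (t, s)) ` S \<subseteq> T \<times> S" using that by auto
      from continuous_on_compose2[OF c c1 this] show ?thesis by simp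
    qed
  qed
  define m where "m = measure lborel A"
  have m0: "m \<ge> 0" unfolding m_def by simp
  show ?thesis
    unfolding continuous_on_iff
  proof (intro ballI allI impI)
    fix t e assume t: "t \<in> T" and e: "(0::real) < e"
    define e' where "e' = e / (m + 1)"
    have e': "e' > 0" using e m0 unfolding e'_def by simp
    obtain d where d: "d > 0" and hd: "\<And>x x'. x \<in> T \<times> S \<Longrightarrow> x' \<in> T \<times> S \<Longrightarrow> dist x' x < d \<Longrightarrow>
       dist ((\<lambda>(t,s). f t s) x') ((\<lambda>(t,s). f t s) x) < e'"
      using uc e' unfolding uniformly_continuous_on_def by metis
    show "\<exists>d>0. \<forall>x'\<in>T. dist x' t < d \<longrightarrow> dist (LINT s:A|lborel. f x' s) (LINT s:A|lborel. f t s) < e"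
    proof (intro exI[of _ d] conjI ballI impI d)
      fix t' assume t': "t' \<in> T" and dt: "dist t' t < d"
      have pw: "\<bar>f t' s - f t s\<bar> \<le> e'" if "s \<in> A" for s
        using hd[of "(t,s)" "(t',s)"] that t t' A dt by (auto simp: dist_Pair_Pair dist_real_def)
      have "dist (LINT s:A|lborel. f t' s) (LINT s:A|lborel. f t s)
          = \<bar>LINT s:A|lborel. f t' s - f t s\<bar>"
        using int[OF t] int[OF t'] by (simp add: dist_real_def)
      also have "\<dots> \<le> (LINT s:A|lborel. \<bar>f t' s - f t s\<bar>)"
        using set_integral_norm_bound[of lborel A "\<lambda>s. f t' s - f t s"] int[OF t] int[OF t'] by auto
      also have "\<dots> \<le> (LINT s:A|lborel. e')"
      proof (rule set_integral_mono)
        show "set_integrable lborel A (\<lambda>s. \<bar>f t' s - f t s\<bar>)"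
          by (rule set_integrable_abs, rule set_integral_diff(1)[OF int[OF t'] int[OF t]])
        show "set_integrable lborel A (\<lambda>s. e')"
          using A fin by (simp add: set_integrable_def less_top)
      qed (use pw in auto)
      also have "\<dots> = m * e'" using set_integral_const[OF A(2) fin, of e'] by (simp add: m_def)
      also have "\<dots> < e" using e m0 unfolding e'_def by (simp add: field_simps)
      finally show "dist (LINT s:A|lborel. f t' s) (LINT s:A|lborel. f t s) < e" .
    qed
  qed
qed

lemma cont_slice:
  assumes c: "continuous_on (T \<times> S) (\<lambda>(t,s). f t s)" and t: "t \<in> T"
  shows "continuous_on S (f t)"
proof -
  have c1: "continuous_on S (\<lambda>s. (t, s))" by (intro continuous_intros)
  have "(\<lambda>s. (t, s)) ` S \<subseteq> T \<times> S" using t by auto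
  from continuous_on_compose2[OF c c1 this] show ?thesis by simp
qed

lemma integral_inner_sum:
  fixes G :: "'a \<Rightarrow> real^3"
  assumes "\<And>i. set_integrable M A (\<lambda>y. G y $ i)"
  shows "(LINT y:A|M. G y \<bullet> h) = (\<Sum>i\<in>UNIV. h $ i * (LINT y:A|M. G y $ i))"
proof -
  have "(LINT y:A|M. G y \<bullet> h) = (LINT y|M. (\<Sum>i\<in>UNIV. indicator A y *\<^sub>R (G y $ i * h $ i)))"
    unfolding set_lebesgue_integral_def inner_vec_def
    by (simp add: sum_distrib_left)
  also have "\<dots> = (\<Sum>i\<in>UNIV. (LINT y|M. indicator A y *\<^sub>R (G y $ i * h $ i)))"
    by (rule Bochner_Integration.integral_sum[of UNIV M "\<lambda>i y. indicator A y *\<^sub>R (G y $ i * h $ i)"]) (use assms in \<open>auto simp: set_integrable_def mult.assoc[symmetric]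
         intro!: integrable_mult_left\<close>)
  also have "\<dots> = (\<Sum>i\<in>UNIV. h $ i * (LINT y:A|M. G y $ i))"
    unfolding set_lebesgue_integral_def
    by (intro sum.cong refl) (simp add: mult.commute mult.left_commute)
  finally show ?thesis .
qed

lemma deriv_param:
  fixes F :: "real^3 \<Rightarrow> real^3 \<Rightarrow> real" and G :: "real^3 \<Rightarrow> real^3 \<Rightarrow> real^3"
  assumes S: "compact S" and A: "A \<subseteq> S" "A \<in> sets lborel" and U: "open U" and x0: "x0 \<in> U"
   and dF: "\<And>x y. x \<in> U \<Longrightarrow> y \<in> S \<Longrightarrow> ((\<lambda>x. F x y) has_derivative (\<lambda>h. G x y \<bullet> h)) (at x)"
   and cG: "continuous_on (U \<times> S) (\<lambda>(x,y). G x y)"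
   and cF: "\<And>x. x \<in> U \<Longrightarrow> continuous_on S (F x)"
  shows "((\<lambda>x. LINT y:A|lborel. F x y) has_derivative
           (\<lambda>h. \<Sum>i\<in>UNIV. h $ i * (LINT y:A|lborel. G x0 y $ i))) (at x0)"
proof -
  obtain \<delta> where \<delta>: "\<delta> > 0" "cball x0 \<delta> \<subseteq> U"
    using U x0 open_contains_cball by blast
  have cG': "continuous_on (cball x0 \<delta> \<times> S) (\<lambda>(x,y). G x y)"
  proof -
    have "cball x0 \<delta> \<times> S \<subseteq> U \<times> S" using \<delta> by auto
    from continuous_on_subset[OF cG this] show ?thesis .
  qed
  have uc: "uniformly_continuous_on (cball x0 \<delta> \<times> S) (\<lambda>(x,y). G x y)"
    using compact_uniformly_continuous[OF cG'] compact_Times[OF compact_cball S] by blast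
  have fin: "emeasure lborel A \<noteq> \<infinity>"
  proof -
    have "bounded A" using bounded_subset[OF compact_imp_bounded[OF S] A(1)] .
    then show ?thesis using emeasure_bounded_finite[of A] by auto
  qed
  have intF: "set_integrable lborel A (F x)" if "x \<in> U" for x
    using cont_set_integrable[OF S cF[OF that] A] .
  have intG: "set_integrable lborel A (\<lambda>y. G x y $ i)" if "x \<in> U" for x i
    by (rule cont_set_integrable[OF S _ A]) (use cont_slice[OF cG that] in \<open>intro continuous_intros\<close>)
  have intGh: "set_integrable lborel A (\<lambda>y. G x y \<bullet> h)" if "x \<in> U" for x h
    by (rule cont_set_integrable[OF S _ A]) (use cont_slice[OF cG that] in \<open>intro continuous_intros\<close>)
  define L where "L h = (LINT y:A|lborel. G x0 y \<bullet> h)" for h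
  have L: "L = (\<lambda>h. \<Sum>i\<in>UNIV. h $ i * (LINT y:A|lborel. G x0 y $ i))"
    unfolding L_def by (intro ext integral_inner_sum intG x0)
  define m where "m = measure lborel A"
  have m0: "m \<ge> 0" unfolding m_def by simp
  have "((\<lambda>x. LINT y:A|lborel. F x y) has_derivative L) (at x0)"
    unfolding has_derivative_at_alt
  proof (intro conjI allI impI)
    have "linear L" unfolding L
      by (rule linearI) (auto simp: sum.distrib sum_distrib_left algebra_simps)
    then show "bounded_linear L" using linear_conv_bounded_linear by blast
  next
    fix e :: real assume e: "e > 0"
    define e' where "e' = e / (m + 1)"
    have e': "e' > 0" using e m0 unfolding e'_def by simp
    obtain d1 where d1: "d1 > 0" and hd: "\<And>x x'. x \<in> cball x0 \<delta> \<times> S \<Longrightarrow> x' \<in> cball x0 \<delta> \<times> S \<Longrightarrow> dist x' x < d1 \<Longrightarrow>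
       dist ((\<lambda>(x,y). G x y) x') ((\<lambda>(x,y). G x y) x) < e'"
      using uc e' unfolding uniformly_continuous_on_def by metis
    define d where "d = min \<delta> d1"
    have d: "d > 0" using d1 \<delta> by (simp add: d_def)
    show "\<exists>d>0. \<forall>x. norm (x - x0) < d \<longrightarrow>
      norm ((LINT y:A|lborel. F x y) - (LINT y:A|lborel. F x0 y) - L (x - x0)) \<le> e * norm (x - x0)"
    proof (intro exI[of _ d] conjI allI impI d)
      fix x assume x: "norm (x - x0) < d"
      have ballU: "ball x0 d \<subseteq> U" using \<delta> by (auto simp: d_def)
      have pw: "\<bar>F x y - F x0 y - G x0 y \<bullet> (x - x0)\<bar> \<le> norm (x - x0) * e'" if y: "y \<in> S" for y
      proof -
        have "norm ((\<lambda>z. F z y) x - (\<lambda>z. F z y) x0 - (\<lambda>h. G x0 y \<bullet> h) (x - x0)) \<le> norm (x - x0) * e'"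
        proof (rule differentiable_bound_linearization[where S="ball x0 d" and f'="\<lambda>z h. G z y \<bullet> h"])
          fix t :: real assume "t \<in> {0..1}"
          then show "x0 + t *\<^sub>R (x - x0) \<in> ball x0 d"
          proof -
            assume t: "t \<in> {0..1}"
            have "t * norm (x - x0) \<le> norm (x - x0)" using t by (simp add: mult_left_le_one_le)
            then show ?thesis using x t by (simp add: dist_norm)
          qed
        next
          fix z assume "z \<in> ball x0 d"
          then show "((\<lambda>z. F z y) has_derivative (\<lambda>h. G z y \<bullet> h)) (at z within ball x0 d)"
          proof -
            assume z: "z \<in> ball x0 d"
            then have "z \<in> U" using ballU by auto
            from has_derivative_at_withinI[OF dF[OF this y]] show ?thesis .
          qed
        next
          fix z assume z: "z \<in> ball x0 d"
          have "dist (G z y) (G x0 y) < e'"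
            using hd[of "(x0,y)" "(z,y)"] z y \<delta> d1 by (auto simp: d_def dist_Pair_Pair dist_commute)
          then have n: "norm (G z y - G x0 y) \<le> e'" by (simp add: dist_norm)
          show "onorm ((\<lambda>h. G z y \<bullet> h) - (\<lambda>h. G x0 y \<bullet> h)) \<le> e'"
          proof (rule onorm_le)
            fix h
            have "norm (((\<lambda>h. G z y \<bullet> h) - (\<lambda>h. G x0 y \<bullet> h)) h) = \<bar>(G z y - G x0 y) \<bullet> h\<bar>"
              by (simp add: inner_diff_left)
            also have "\<dots> \<le> norm (G z y - G x0 y) * norm h" by (rule Cauchy_Schwarz_ineq2)
            also have "\<dots> \<le> e' * norm h" by (rule mult_right_mono[OF n norm_ge_zero])
            finally show "norm (((\<lambda>h. G z y \<bullet> h) - (\<lambda>h. G x0 y \<bullet> h)) h) \<le> e' * norm h" .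
          qed
        qed (use d in auto)
        then show ?thesis by simp
      qed
      have xU: "x \<in> U" using x ballU by (auto simp: dist_norm norm_minus_commute)
      have "norm ((LINT y:A|lborel. F x y) - (LINT y:A|lborel. F x0 y) - L (x - x0))
          = \<bar>LINT y:A|lborel. F x y - F x0 y - G x0 y \<bullet> (x - x0)\<bar>"
        unfolding L_def
        using intF[OF xU] intF[OF x0] intGh[OF x0, of "x - x0"]
        by (simp add: set_integral_diff)
      also have "\<dots> \<le> (LINT y:A|lborel. \<bar>F x y - F x0 y - G x0 y \<bullet> (x - x0)\<bar>)"
        using set_integral_norm_bound[of lborel A "\<lambda>y. F x y - F x0 y - G x0 y \<bullet> (x - x0)"]
          intF[OF xU] intF[OF x0] intGh[OF x0, of "x - x0"] by (auto simp: set_integral_diff)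
      also have "\<dots> \<le> (LINT y:A|lborel. norm (x - x0) * e')"
      proof (rule set_integral_mono)
        show "set_integrable lborel A (\<lambda>y. \<bar>F x y - F x0 y - G x0 y \<bullet> (x - x0)\<bar>)"
          by (intro set_integrable_abs set_integral_diff(1) intF xU x0 intGh)
        show "set_integrable lborel A (\<lambda>y. norm (x - x0) * e')"
          using A fin by (simp add: set_integrable_def less_top)
      qed (use pw A in auto)
      also have "\<dots> = m * (norm (x - x0) * e')"
        using set_integral_const[OF A(2) fin, of "norm (x - x0) * e'"] by (simp add: m_def)
      also have "\<dots> \<le> e * norm (x - x0)"
      proof -
        have "m * e' \<le> e" using e m0 unfolding e'_def by (simp add: field_simps)
        then show ?thesis using mult_right_mono[of "m * e'" e "norm (x - x0)"]
          by (simp add: algebra_simps)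
      qed
      finally show "norm ((LINT y:A|lborel. F x y) - (LINT y:A|lborel. F x0 y) - L (x - x0)) \<le> e * norm (x - x0)" .
    qed
  qed
  then show ?thesis using L by simp
qed

lemma int_pos:
  fixes f :: "'a::euclidean_space \<Rightarrow> real"
  assumes A: "open A" "A \<noteq> {}" and c: "continuous_on A f" and pos: "\<And>x. x \<in> A \<Longrightarrow> f x > 0"
    and int: "set_integrable lborel A f"
  shows "(LINT x:A|lborel. f x) > 0"
proof -
  obtain x where x: "x \<in> A" using A by auto
  define c where "c = f x / 2"
  have c0: "c > 0" using pos[OF x] by (simp add: c_def)
  obtain d where d: "d > 0" and hd: "\<And>x'. x' \<in> A \<Longrightarrow> dist x' x < d \<Longrightarrow> dist (f x') (f x) < c"
    using c x c0 unfolding continuous_on_iff by metis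
  obtain e1 where e1: "e1 > 0" "ball x e1 \<subseteq> A" using A(1) x open_contains_ball by blast
  define B where "B = ball x (min d e1)"
  have BA: "B \<subseteq> A" using e1 by (auto simp: B_def)
  have fB: "f y \<ge> c" if "y \<in> B" for y
    using hd[of y] that BA by (auto simp: B_def dist_real_def dist_commute c_def abs_if split: if_splits)
  have finB: "emeasure lborel B \<noteq> \<infinity>" unfolding B_def using emeasure_lborel_ball_finite[of x "min d e1"] by (simp add: less_top[symmetric])
  have "(LINT y:A|lborel. indicator B y * c) \<le> (LINT y:A|lborel. f y)"
  proof (rule set_integral_mono[OF _ int])
    show "set_integrable lborel A (\<lambda>y. indicator B y * c)"
      using finB unfolding set_integrable_def
      by (intro integrable_mult_indicator) (use A(1) in \<open>auto simp: B_def less_top intro!: integrable_real_mult_indicator\<close>)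
    show "indicator B y * c \<le> f y" if "y \<in> A" for y
      using fB[of y] pos[OF that] c0 by (auto split: split_indicator)
  qed
  moreover have "(LINT y:A|lborel. indicator B y * c) = (LINT y:B|lborel. c)"
    unfolding set_lebesgue_integral_def
    by (intro Bochner_Integration.integral_cong refl) (use BA in \<open>auto split: split_indicator\<close>)
  moreover have "(LINT y:B|lborel. c) = measure lborel B * c"
    using set_integral_const[of B lborel c] finB by (simp add: B_def)
  moreover have "measure lborel B > 0" unfolding B_def using content_ball_pos d e1 by simp
  ultimately show ?thesis using c0 by (smt (verit) mult_pos_pos)
qed

definition K :: "real \<Rightarrow> real^3 \<Rightarrow> real^3 \<Rightarrow> real" where
  "K \<tau> x y = exp (- \<tau> * dist x y) / dist x y"

definition GK :: "real \<Rightarrow> real^3 \<Rightarrow> real^3 \<Rightarrow> real^3" where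
  "GK \<tau> x y = (- (\<tau> * dist x y + 1) * exp (- \<tau> * dist x y) / dist x y ^ 3) *\<^sub>R (x - y)"

lemma K_deriv:
  assumes "x \<noteq> y"
  shows "((\<lambda>x. K \<tau> x y) has_derivative (\<lambda>h. GK \<tau> x y \<bullet> h)) (at x)"
proof -
  define s where "s = norm (x - y)"
  have s0: "s > 0" using assms by (simp add: s_def)
  have n: "((\<lambda>x. norm (x - y)) has_derivative (\<lambda>h. sgn (x - y) \<bullet> h)) (at x)"
  proof -
    have "(norm has_derivative (\<lambda>h. h \<bullet> sgn (x - y))) (at (x - y))"
      using has_derivative_norm[of "x - y"] assms by simp
    from has_derivative_compose[OF has_derivative_diff[OF has_derivative_ident has_derivative_const] this]
    show ?thesis by (simp add: o_def inner_commute)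
  qed
  define D where "D = - (\<tau> * s + 1) * exp (- \<tau> * s) / s\<^sup>2"
  have g: "((\<lambda>t. exp (- \<tau> * t) / t) has_real_derivative D) (at s)"
    unfolding D_def using s0
    by (auto intro!: derivative_eq_intros simp: power2_eq_square field_simps)
  have "((\<lambda>x. exp (- \<tau> * norm (x - y)) / norm (x - y)) has_derivative
        (\<lambda>h. D * (sgn (x - y) \<bullet> h))) (at x)"
    using has_derivative_compose[OF n has_field_derivative_imp_has_derivative[OF g[unfolded s_def]]]
    by (simp add: o_def s_def)
  moreover have "(\<lambda>h. D * (sgn (x - y) \<bullet> h)) = (\<lambda>h. GK \<tau> x y \<bullet> h)"
  proof (rule ext)
    fix h
    have sg: "sgn (x - y) = (1 / s) *\<^sub>R (x - y)" by (simp add: sgn_div_norm s_def divide_inverse_commute)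
    have "D * (sgn (x - y) \<bullet> h) = (D / s) * ((x - y) \<bullet> h)"
      unfolding sg inner_scaleR_left by simp
    also have "\<dots> = (- (\<tau> * s + 1) * exp (- \<tau> * s) / s ^ 3) * ((x - y) \<bullet> h)"
      unfolding D_def using s0 by (simp add: power2_eq_square power3_eq_cube)
    also have "\<dots> = GK \<tau> x y \<bullet> h"
      unfolding GK_def inner_scaleR_left by (simp add: dist_norm s_def)
    finally show "D * (sgn (x - y) \<bullet> h) = GK \<tau> x y \<bullet> h" .
  qed
  ultimately show ?thesis unfolding K_def dist_norm by simp
qed

lemma GK_cont:
  assumes "\<And>p. p \<in> T \<Longrightarrow> fst p \<noteq> snd p"
  shows "continuous_on T (\<lambda>p. GK \<tau> (fst p) (snd p))"
  unfolding GK_def using assms by (intro continuous_intros) auto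

lemma K_cont:
  assumes "\<And>p. p \<in> T \<Longrightarrow> fst p \<noteq> snd p"
  shows "continuous_on T (\<lambda>p. K \<tau> (fst p) (snd p))"
  unfolding K_def using assms by (intro continuous_intros) auto

lemma vpot_eq:
  "vpot \<tau> (indicator A) = (\<lambda>x. 1 / (4 * pi) * (LINT y:A|lborel. K \<tau> x y))"
  unfolding vpot_def set_lebesgue_integral_def K_def
  by (intro ext arg_cong2[where f="(*)"] refl Bochner_Integration.integral_cong) auto

lemma grad_vpot:
  assumes "x \<notin> cball b r"
  shows "grad (vpot \<tau> (indicator (ball b r))) x =
         (\<chi> i. 1 / (4 * pi) * (LINT y:ball b r|lborel. GK \<tau> x y $ i))"
proof -
  have U: "open (- cball b r)" by auto
  have d: "((\<lambda>x. LINT y:ball b r|lborel. K \<tau> x y) has_derivative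
           (\<lambda>h. \<Sum>i\<in>UNIV. h $ i * (LINT y:ball b r|lborel. GK \<tau> x y $ i))) (at x)"
  proof (rule deriv_param[OF compact_cball ball_subset_cball _ U])
    show "x \<in> - cball b r" using assms by simp
    show "((\<lambda>x. K \<tau> x y) has_derivative (\<lambda>h. GK \<tau> x y \<bullet> h)) (at x)"
      if "x \<in> - cball b r" "y \<in> cball b r" for x y
      using that by (intro K_deriv) auto
    show "continuous_on ((- cball b r) \<times> cball b r) (\<lambda>(x, y). GK \<tau> x y)"
      unfolding case_prod_beta by (rule GK_cont) auto
    show "continuous_on (cball b r) (K \<tau> x)" if "x \<in> - cball b r" for x
      using K_cont[of "Pair x ` cball b r" \<tau>] that
      unfolding K_def using that by (intro continuous_intros) auto
  qed auto
  have d2: "(vpot \<tau> (indicator (ball b r)) has_derivative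
           (\<lambda>h. 1 / (4 * pi) * (\<Sum>i\<in>UNIV. h $ i * (LINT y:ball b r|lborel. GK \<tau> x y $ i)))) (at x)"
    unfolding vpot_eq by (rule has_derivative_mult_right[OF d])
  show ?thesis
    unfolding grad_def frechet_derivative_at[OF d2, symmetric]
    by (simp add: axis_def vec_eq_iff if_distrib[where f="\<lambda>t. t * _"] sum.delta cong: if_cong)
qed

lemma key_real:
  fixes a a' \<tau> c \<delta> :: real
  assumes d: "0 < \<delta>" "\<delta> \<le> 1" and t: "\<tau> > 0"
    and a: "\<tau> \<le> a" "a \<le> \<tau> * (1 + \<delta> / 4)" and a': "\<tau> \<le> a'" "a' \<le> \<tau> * (1 + \<delta> / 4)"
    and c: "c \<ge> -1 + \<delta>"
  shows "a * a' * c + \<tau>\<^sup>2 \<ge> \<delta> / 4 * \<tau>\<^sup>2"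
proof (cases "c \<ge> 0")
  case True
  have "a * a' * c \<ge> 0" using True a a' t by simp
  moreover have "\<delta> / 4 * \<tau>\<^sup>2 \<le> \<tau>\<^sup>2" using d mult_right_mono[of "\<delta>/4" 1 "\<tau>\<^sup>2"] by simp
  ultimately show ?thesis by linarith
next
  case False
  have aa: "a * a' \<le> (\<tau> * (1 + \<delta> / 4))\<^sup>2"
    unfolding power2_eq_square using a a' t by (intro mult_mono) auto
  have "a * a' * c \<ge> (\<tau> * (1 + \<delta> / 4))\<^sup>2 * c"
    using mult_right_mono_neg[OF aa] False by simp
  moreover have "(\<tau> * (1 + \<delta> / 4))\<^sup>2 * c \<ge> (\<tau> * (1 + \<delta> / 4))\<^sup>2 * (-1 + \<delta>)"
    using c by (intro mult_left_mono) auto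
  moreover have "(\<tau> * (1 + \<delta> / 4))\<^sup>2 * (-1 + \<delta>) + \<tau>\<^sup>2 \<ge> \<delta> / 4 * \<tau>\<^sup>2"
  proof -
    have "(1 + \<delta> / 4)\<^sup>2 * (1 - \<delta>) \<le> 1 - \<delta> / 4"
    proof -
      have "(1 + \<delta> / 4)\<^sup>2 \<le> 1 + 3 * \<delta> / 4"
        using d by (simp add: power2_eq_square field_simps)
      then have "(1 + \<delta> / 4)\<^sup>2 * (1 - \<delta>) \<le> (1 + 3 * \<delta> / 4) * (1 - \<delta>)"
        using d by (intro mult_right_mono) auto
      also have "\<dots> \<le> 1 - \<delta> / 4" using d by (simp add: algebra_simps)
      finally show ?thesis .
    qed
    then have "\<tau>\<^sup>2 * ((1 + \<delta> / 4)\<^sup>2 * (1 - \<delta>)) \<le> \<tau>\<^sup>2 * (1 - \<delta> / 4)"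
      by (intro mult_left_mono) auto
    moreover have "\<tau>\<^sup>2 * ((1 + \<delta> / 4)\<^sup>2 * (1 - \<delta>)) = - ((\<tau> * (1 + \<delta> / 4))\<^sup>2 * (-1 + \<delta>))"
      by (simp only: power_mult_distrib) (simp add: algebra_simps)
    moreover have "\<tau>\<^sup>2 * (1 - \<delta> / 4) = \<tau>\<^sup>2 - \<delta> / 4 * \<tau>\<^sup>2" by (simp add: algebra_simps)
    ultimately show ?thesis by linarith
  qed
  ultimately show ?thesis by linarith
qed

lemma key_vec:
  fixes x y y' :: "real^3"
  assumes s: "d0 \<le> dist x y" "dist x y \<le> R0" and s': "d0 \<le> dist x y'" "dist x y' \<le> R0" and d0: "d0 > 0"
    and cs: "((x - y) \<bullet> (x - y')) / (dist x y * dist x y') \<ge> -1 + \<delta>"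
    and d: "0 < \<delta>" "\<delta> \<le> 1" and t: "\<tau> \<ge> 4 / (\<delta> * d0)"
  shows "GK \<tau> x y \<bullet> GK \<tau> x y' + \<tau>\<^sup>2 * K \<tau> x y * K \<tau> x y'
         \<ge> \<delta> / 4 / R0\<^sup>2 * \<tau>\<^sup>2 * exp (- \<tau> * (dist x y + dist x y'))"
proof -
  define u where "u = dist x y"
  define u' where "u' = dist x y'"
  define P where "P = (x - y) \<bullet> (x - y')"
  define E where "E = exp (- \<tau> * u) * exp (- \<tau> * u')"
  have u0: "u > 0" "u' > 0" using s s' d0 by (auto simp: u_def u'_def)
  have t0: "\<tau> > 0" using t d d0 by (smt (verit) divide_pos_pos mult_pos_pos)
  have inv: "1 / d0 \<le> \<tau> * (\<delta> / 4)"
    using t d d0 by (simp add: field_simps)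
  define a where "a = \<tau> + 1 / u"
  define a' where "a' = \<tau> + 1 / u'"
  have ab: "\<tau> \<le> a" "a \<le> \<tau> * (1 + \<delta> / 4)"
  proof -
    show "\<tau> \<le> a" using u0 by (simp add: a_def)
    have "1 / u \<le> 1 / d0" using s d0 by (simp add: u_def frac_le)
    then show "a \<le> \<tau> * (1 + \<delta> / 4)" using inv by (simp add: a_def algebra_simps)
  qed
  have ab': "\<tau> \<le> a'" "a' \<le> \<tau> * (1 + \<delta> / 4)"
  proof -
    show "\<tau> \<le> a'" using u0 by (simp add: a'_def)
    have "1 / u' \<le> 1 / d0" using s' d0 by (simp add: u'_def frac_le)
    then show "a' \<le> \<tau> * (1 + \<delta> / 4)" using inv by (simp add: a'_def algebra_simps)
  qed
  have E0: "E > 0" by (simp add: E_def)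
  have eq: "GK \<tau> x y \<bullet> GK \<tau> x y' + \<tau>\<^sup>2 * K \<tau> x y * K \<tau> x y'
      = E / (u * u') * (a * a' * (P / (u * u')) + \<tau>\<^sup>2)"
    unfolding GK_def K_def inner_scaleR_left inner_scaleR_right
    using u0 by (simp add: u_def[symmetric] u'_def[symmetric] P_def[symmetric] E_def a_def a'_def
        power3_eq_cube power2_eq_square field_simps)
  have kr: "a * a' * (P / (u * u')) + \<tau>\<^sup>2 \<ge> \<delta> / 4 * \<tau>\<^sup>2"
    by (rule key_real[OF d t0 ab ab']) (use cs in \<open>simp add: P_def u_def u'_def\<close>)
  have R0: "R0 > 0" using s d0 by linarith
  have uu: "u * u' \<le> R0\<^sup>2" using s s' u0 R0 unfolding power2_eq_square
    by (intro mult_mono) (auto simp: u_def u'_def)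
  have "E / (u * u') * (a * a' * (P / (u * u')) + \<tau>\<^sup>2) \<ge> E / (u * u') * (\<delta> / 4 * \<tau>\<^sup>2)"
    using kr E0 u0 by (intro mult_left_mono) auto
  moreover have "E / (u * u') * (\<delta> / 4 * \<tau>\<^sup>2) \<ge> E / R0\<^sup>2 * (\<delta> / 4 * \<tau>\<^sup>2)"
  proof -
    have pp: "0 < R0\<^sup>2 * (u * u')" using u0 R0 by simp
    have "E / R0\<^sup>2 \<le> E / (u * u')" using divide_left_mono[OF uu _ pp, of E] E0 by simp
    then show ?thesis using d by (intro mult_right_mono) auto
  qed
  moreover have "E = exp (- \<tau> * (dist x y + dist x y'))"
    by (simp add: E_def u_def u'_def mult_exp_exp algebra_simps)
  ultimately show ?thesis unfolding eq by (simp add: algebra_simps)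
qed

lemma GK_cont2:
  assumes "continuous_on T f" "continuous_on T g" "\<And>p. p \<in> T \<Longrightarrow> f p \<noteq> g p"
  shows "continuous_on T (\<lambda>p. GK \<tau> (f p) (g p))"
  unfolding GK_def using assms by (intro continuous_intros) auto

lemma K_cont2:
  assumes "continuous_on T f" "continuous_on T g" "\<And>p. p \<in> T \<Longrightarrow> f p \<noteq> g p"
  shows "continuous_on T (\<lambda>p. K \<tau> (f p) (g p))"
  unfolding K_def using assms by (intro continuous_intros) auto

lemma split4:
  fixes a1 a2 a3 a4 b1 b2 b3 b4 :: "'x \<Rightarrow> real"
  assumes a: "set_integrable M A a1" "set_integrable M A a2" "set_integrable M A a3" "set_integrable M A a4"
    and b: "set_integrable M A' b1" "set_integrable M A' b2" "set_integrable M A' b3" "set_integrable M A' b4"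
  shows "(LINT y:A|M. LINT y':A'|M. a1 y * b1 y' + a2 y * b2 y' + a3 y * b3 y' + a4 y * b4 y')
    = (LINT y:A|M. a1 y) * (LINT y:A'|M. b1 y) + (LINT y:A|M. a2 y) * (LINT y:A'|M. b2 y)
    + (LINT y:A|M. a3 y) * (LINT y:A'|M. b3 y) + (LINT y:A|M. a4 y) * (LINT y:A'|M. b4 y)"
proof -
  have inner: "(LINT y':A'|M. a1 y * b1 y' + a2 y * b2 y' + a3 y * b3 y' + a4 y * b4 y')
     = a1 y * (LINT y:A'|M. b1 y) + a2 y * (LINT y:A'|M. b2 y) + a3 y * (LINT y:A'|M. b3 y)
       + a4 y * (LINT y:A'|M. b4 y)" for y
    using b by (simp add: set_integral_add)
  show ?thesis unfolding inner using a by (simp add: set_integral_add)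
qed

lemma compact_pos_min:
  fixes f :: "'a::topological_space \<Rightarrow> real"
  assumes "compact S" "S \<noteq> {}" "continuous_on S f" "\<And>p. p \<in> S \<Longrightarrow> f p > 0"
  shows "\<exists>m>0. \<forall>p\<in>S. m \<le> f p"
  using continuous_attains_inf[OF assms(1-3)] assms(4) by blast

lemma compact_upper:
  fixes f :: "'a::topological_space \<Rightarrow> real"
  assumes "compact S" "S \<noteq> {}" "continuous_on S f"
  shows "\<exists>M. \<forall>p\<in>S. f p \<le> M"
  using continuous_attains_sup[OF assms(1-3)] by blast

lemma cos_gt:
  fixes x y y' :: "real^3"
  assumes xy: "x \<noteq> y" "x \<noteq> y'" and nh: "x \<notin> convex hull {y, y'}"
  shows "(x - y) \<bullet> (x - y') / (dist x y * dist x y') + 1 > 0"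
proof -
  define u where "u = x - y"
  define v where "v = y' - x"
  have nu: "norm u > 0" "norm v > 0" using xy by (auto simp: u_def v_def)
  have eq: "(x - y) \<bullet> (x - y') = - (u \<bullet> v)" by (simp add: u_def v_def inner_diff_right inner_diff_left inner_commute)
  have du: "dist x y = norm u" "dist x y' = norm v" by (simp_all add: u_def v_def dist_norm norm_minus_commute)
  have cs: "u \<bullet> v \<le> norm u * norm v" by (rule norm_cauchy_schwarz)
  have "u \<bullet> v \<noteq> norm u * norm v"
  proof
    assume "u \<bullet> v = norm u * norm v"
    then have e: "norm u *\<^sub>R v = norm v *\<^sub>R u" by (simp add: norm_cauchy_schwarz_eq)
    define t where "t = norm u / (norm u + norm v)"
    have t: "0 \<le> t" "t \<le> 1"
    proof -
      have p: "norm u + norm v > 0" by (rule add_pos_pos[OF nu])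
      show "0 \<le> t" unfolding t_def using p by simp
      show "t \<le> 1" unfolding t_def using p nu by (simp add: pos_divide_le_eq[OF p])
    qed
    have "(norm u + norm v) *\<^sub>R x = norm v *\<^sub>R y + norm u *\<^sub>R y'"
      using e unfolding u_def v_def by (simp add: algebra_simps)
    then have hx: "(norm u + norm v) *\<^sub>R x = norm v *\<^sub>R y + norm u *\<^sub>R y'" .
    have p: "norm u + norm v > 0" by (rule add_pos_pos[OF nu])
    have "x = (1 / (norm u + norm v)) *\<^sub>R ((norm u + norm v) *\<^sub>R x)" using p by simp
    also have "\<dots> = (norm v / (norm u + norm v)) *\<^sub>R y + (norm u / (norm u + norm v)) *\<^sub>R y'"
      unfolding hx by (simp add: scaleR_add_right)
    also have "norm v / (norm u + norm v) = 1 - t" using p by (simp add: t_def field_simps)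
    finally have "x = (1 - t) *\<^sub>R y + t *\<^sub>R y'" by (simp add: t_def)
    then have "x \<in> convex hull {y, y'}" unfolding convex_hull_2 using t by force
    then show False using nh by simp
  qed
  then have lt: "u \<bullet> v < norm u * norm v" using cs by simp
  have "(x - y) \<bullet> (x - y') / (dist x y * dist x y') = - (u \<bullet> v) / (norm u * norm v)"
    unfolding eq du ..
  also have "\<dots> > -1" using lt nu by (simp add: field_simps)
  finally show ?thesis by simp
qed

lemma nested:
  fixes f :: "real^3 \<Rightarrow> real^3 \<Rightarrow> real^3 \<Rightarrow> real"
  assumes T: "compact T" and S1: "compact S1" and S2: "compact S2"
    and A1: "A1 \<subseteq> S1" "A1 \<in> sets lborel" and A2: "A2 \<subseteq> S2" "A2 \<in> sets lborel"
    and c: "continuous_on ((T \<times> S1) \<times> S2) (\<lambda>p. f (fst (fst p)) (snd (fst p)) (snd p))"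
  shows "\<And>x y. x \<in> T \<Longrightarrow> y \<in> S1 \<Longrightarrow> set_integrable lborel A2 (f x y)"
    and "\<And>x. x \<in> T \<Longrightarrow> continuous_on S1 (\<lambda>y. LINT y':A2|lborel. f x y y')"
    and "\<And>x. x \<in> T \<Longrightarrow> set_integrable lborel A1 (\<lambda>y. LINT y':A2|lborel. f x y y')"
    and "continuous_on T (\<lambda>x. LINT y:A1|lborel. LINT y':A2|lborel. f x y y')"
proof -
  have c': "continuous_on ((T \<times> S1) \<times> S2) (\<lambda>(q, y'). f (fst q) (snd q) y')"
    using c by (simp add: case_prod_beta)
  show i1: "set_integrable lborel A2 (f x y)" if "x \<in> T" "y \<in> S1" for x y
    using cont_set_integrable[OF S2 cont_slice[OF c', of "(x,y)"] A2] that by simp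
  have cq: "continuous_on (T \<times> S1) (\<lambda>q. LINT y':A2|lborel. f (fst q) (snd q) y')"
    by (rule cont_param[OF compact_Times[OF T S1] S2 c' A2])
  then have cq': "continuous_on (T \<times> S1) (\<lambda>(x, y). LINT y':A2|lborel. f x y y')"
    by (simp add: case_prod_beta)
  show c2: "continuous_on S1 (\<lambda>y. LINT y':A2|lborel. f x y y')" if "x \<in> T" for x
    using cont_slice[OF cq' that] .
  show "set_integrable lborel A1 (\<lambda>y. LINT y':A2|lborel. f x y y')" if "x \<in> T" for x
    using cont_set_integrable[OF S1 c2[OF that] A1] .
  show "continuous_on T (\<lambda>x. LINT y:A1|lborel. LINT y':A2|lborel. f x y y')"
    by (rule cont_param[OF T S1 cq' A1])
qed



theorem lemma4p1:
  fixes D :: "(real^3) set" and b b' :: "real^3" and r r' :: real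
  assumes "open D" and "bounded D" and "D \<noteq> {}"
    and "r > 0" and "r' > 0"
    and "convex hull (closure (ball b r) \<union> closure (ball b' r')) \<inter> closure D = {}"
  shows "\<exists>C \<tau>0. C > 0 \<and> \<tau>0 > 0 \<and> (\<forall>\<tau>\<ge>\<tau>0.
           Jfun \<tau> D (indicator (ball b r)) (indicator (ball b' r')) > 0 \<and>
           Jfun \<tau> D (indicator (ball b r)) (indicator (ball b' r'))
             \<ge> C * \<tau>\<^sup>2 * (LINT x:D|lborel. (LINT y:ball b r|lborel. (LINT y':ball b' r'|lborel.
                   exp (- \<tau> * phi x y y')))))"
proof -
  note oD = assms(1) and bD = assms(2) and neD = assms(3) and r = assms(4) and r' = assms(5)
    and disj = assms(6)
  have cD: "compact (closure D)" using bD by (simp add: compact_closure)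
  have Dsub: "D \<subseteq> closure D" by (rule closure_subset)
  have Dsets: "D \<in> sets lborel" using oD by simp
  define H where "H = convex hull (cball b r \<union> cball b' r')"
  have HD: "H \<inter> closure D = {}" using disj r r' by (simp add: H_def)
  have hull2: "convex hull {y, y'} \<subseteq> H" if "y \<in> cball b r" "y' \<in> cball b' r'" for y y'
    unfolding H_def using that by (intro hull_mono) auto
  have notin: "x \<notin> convex hull {y, y'}" if "x \<in> closure D" "y \<in> cball b r" "y' \<in> cball b' r'" for x y y'
    using hull2[OF that(2,3)] HD that(1) by blast
  have ny: "x \<noteq> y" if "x \<in> closure D" "y \<in> cball b r" for x y
  proof -
    have "y \<in> H" unfolding H_def using that(2) by (intro hull_inc) auto
    then show ?thesis using HD that(1) by blast
  qed
  have ny': "x \<noteq> y'" if "x \<in> closure D" "y' \<in> cball b' r'" for x y'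
  proof -
    have "y' \<in> H" unfolding H_def using that(2) by (intro hull_inc) auto
    then show ?thesis using HD that(1) by blast
  qed
  define KK where "KK = (closure D \<times> cball b r) \<times> cball b' r'"
  have cKK: "compact KK" unfolding KK_def by (intro compact_Times cD compact_cball)
  have neKK: "KK \<noteq> {}" unfolding KK_def using neD r r' closure_subset by fastforce
  have KKe: "fst (fst p) \<in> closure D" "snd (fst p) \<in> cball b r" "snd p \<in> cball b' r'" if "p \<in> KK" for p
    using that by (auto simp: KK_def)
  have cf: "continuous_on KK (\<lambda>p. fst (fst p))" "continuous_on KK (\<lambda>p. snd (fst p))"
    "continuous_on KK (\<lambda>p. snd p)" by (intro continuous_intros)+
  have dne: "dist (fst (fst p)) (snd (fst p)) \<noteq> 0" "dist (fst (fst p)) (snd p) \<noteq> 0" if "p \<in> KK" for p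
    using ny[OF KKe(1,2)[OF that]] ny'[OF KKe(1) KKe(3)] that by auto
  obtain m where m: "m > 0" and hm: "\<And>p. p \<in> KK \<Longrightarrow> m \<le>
     (fst (fst p) - snd (fst p)) \<bullet> (fst (fst p) - snd p) / (dist (fst (fst p)) (snd (fst p)) * dist (fst (fst p)) (snd p)) + 1"
  proof -
    have "\<exists>m>0. \<forall>p\<in>KK. m \<le>
     (fst (fst p) - snd (fst p)) \<bullet> (fst (fst p) - snd p) / (dist (fst (fst p)) (snd (fst p)) * dist (fst (fst p)) (snd p)) + 1"
    proof (rule compact_pos_min[OF cKK neKK])
      show "continuous_on KK (\<lambda>p. (fst (fst p) - snd (fst p)) \<bullet> (fst (fst p) - snd p) /
          (dist (fst (fst p)) (snd (fst p)) * dist (fst (fst p)) (snd p)) + 1)"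
        using dne by (intro continuous_intros) auto
      show "0 < (fst (fst p) - snd (fst p)) \<bullet> (fst (fst p) - snd p) /
          (dist (fst (fst p)) (snd (fst p)) * dist (fst (fst p)) (snd p)) + 1" if "p \<in> KK" for p
        using cos_gt[OF ny[OF KKe(1,2)[OF that]] ny'[OF KKe(1) KKe(3)] notin[OF KKe[OF that]]] that by simp
    qed
    then show ?thesis using that by blast
  qed
  obtain d0 where d0: "d0 > 0" and hd0: "\<And>p. p \<in> KK \<Longrightarrow> d0 \<le>
     min (dist (fst (fst p)) (snd (fst p))) (dist (fst (fst p)) (snd p))"
  proof -
    have "\<exists>m>0. \<forall>p\<in>KK. m \<le> min (dist (fst (fst p)) (snd (fst p))) (dist (fst (fst p)) (snd p))"
      by (rule compact_pos_min[OF cKK neKK]) (use dne in \<open>auto intro!: continuous_intros\<close>)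
    then show ?thesis using that by blast
  qed
  obtain R0 where hR0: "\<And>p. p \<in> KK \<Longrightarrow>
     max (dist (fst (fst p)) (snd (fst p))) (dist (fst (fst p)) (snd p)) \<le> R0"
  proof -
    have "\<exists>M. \<forall>p\<in>KK. max (dist (fst (fst p)) (snd (fst p))) (dist (fst (fst p)) (snd p)) \<le> M"
      by (rule compact_upper[OF cKK neKK]) (auto intro!: continuous_intros)
    then show ?thesis using that by blast
  qed
  have R0: "R0 > 0"
  proof -
    obtain p where "p \<in> KK" using neKK by auto
    then show ?thesis using hd0[of p] hR0[of p] d0 by linarith
  qed
  define \<delta> where "\<delta> = min m 1"
  have \<delta>: "0 < \<delta>" "\<delta> \<le> 1" using m by (auto simp: \<delta>_def)
  define C where "C = (1 / (4 * pi))\<^sup>2 * (\<delta> / 4 / R0\<^sup>2)"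
  define \<tau>0 where "\<tau>0 = 4 / (\<delta> * d0)"
  have C: "C > 0" using \<delta> R0 by (simp add: C_def)
  have t0: "\<tau>0 > 0" using \<delta> d0 by (simp add: \<tau>0_def)
  have main: "Jfun \<tau> D (indicator (ball b r)) (indicator (ball b' r')) > 0 \<and>
           Jfun \<tau> D (indicator (ball b r)) (indicator (ball b' r'))
             \<ge> C * \<tau>\<^sup>2 * (LINT x:D|lborel. (LINT y:ball b r|lborel. (LINT y':ball b' r'|lborel.
                   exp (- \<tau> * phi x y y'))))" if t: "\<tau> \<ge> \<tau>0" for \<tau>
  proof -
    have tpos: "\<tau> > 0" using t t0 by linarith
    have nyK: "fst (fst p) \<noteq> snd (fst p)" "fst (fst p) \<noteq> snd p" if "p \<in> KK" for p
      using dne[OF that] by auto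
    define c where "c = 1 / (4 * pi)"
    define w where "w x y y' = c\<^sup>2 * (GK \<tau> x y \<bullet> GK \<tau> x y' + \<tau>\<^sup>2 * K \<tau> x y * K \<tau> x y')" for x y y'
    define e where "e x y y' = exp (- \<tau> * phi x y y')" for x y y'
    have cw: "continuous_on KK (\<lambda>p. w (fst (fst p)) (snd (fst p)) (snd p))"
      unfolding w_def
      by (intro continuous_intros GK_cont2 K_cont2 cf) (auto dest: nyK)
    have ce: "continuous_on KK (\<lambda>p. e (fst (fst p)) (snd (fst p)) (snd p))"
      unfolding e_def phi_def by (intro continuous_intros)
    have bs: "ball b r \<in> sets lborel" "ball b' r' \<in> sets lborel" by simp_all
    note NW = nested[OF cD compact_cball compact_cball ball_subset_cball bs(1) ball_subset_cball bs(2)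
        cw[unfolded KK_def]]
    note NE = nested[OF cD compact_cball compact_cball ball_subset_cball bs(1) ball_subset_cball bs(2)
        ce[unfolded KK_def]]
    have eqJ: "grad (vpot \<tau> (indicator (ball b r))) x \<bullet> grad (vpot \<tau> (indicator (ball b' r'))) x
        + \<tau>\<^sup>2 * vpot \<tau> (indicator (ball b r)) x * vpot \<tau> (indicator (ball b' r')) x
        = (LINT y:ball b r|lborel. LINT y':ball b' r'|lborel. w x y y')" if x: "x \<in> D" for x
    proof -
      have xc: "x \<notin> cball b r" "x \<notin> cball b' r'" using ny ny' x Dsub by blast+
      have cG1: "continuous_on (cball b r) (\<lambda>y. GK \<tau> x y)"
        by (rule GK_cont2) (use xc in \<open>auto intro: continuous_intros\<close>)
      have cG2: "continuous_on (cball b' r') (\<lambda>y. GK \<tau> x y)"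
        by (rule GK_cont2) (use xc in \<open>auto intro: continuous_intros\<close>)
      have cK1: "continuous_on (cball b r) (\<lambda>y. K \<tau> x y)"
        by (rule K_cont2) (use xc in \<open>auto intro: continuous_intros\<close>)
      have cK2: "continuous_on (cball b' r') (\<lambda>y. K \<tau> x y)"
        by (rule K_cont2) (use xc in \<open>auto intro: continuous_intros\<close>)
      have iG1: "set_integrable lborel (ball b r) (\<lambda>y. c * GK \<tau> x y $ i)" for i
        by (rule cont_set_integrable[OF compact_cball _ ball_subset_cball bs(1)])
           (use cG1 in \<open>intro continuous_intros\<close>)
      have iG2: "set_integrable lborel (ball b' r') (\<lambda>y. c * GK \<tau> x y $ i)" for i
        by (rule cont_set_integrable[OF compact_cball _ ball_subset_cball bs(2)])
           (use cG2 in \<open>intro continuous_intros\<close>)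
      have iK1: "set_integrable lborel (ball b r) (\<lambda>y. c * \<tau>\<^sup>2 * K \<tau> x y)"
        by (rule cont_set_integrable[OF compact_cball _ ball_subset_cball bs(1)])
           (use cK1 in \<open>intro continuous_intros\<close>)
      have iK2: "set_integrable lborel (ball b' r') (\<lambda>y. c * K \<tau> x y)"
        by (rule cont_set_integrable[OF compact_cball _ ball_subset_cball bs(2)])
           (use cK2 in \<open>intro continuous_intros\<close>)
      have pw: "w x y y' = (c * GK \<tau> x y $ 1) * (c * GK \<tau> x y' $ 1) + (c * GK \<tau> x y $ 2) * (c * GK \<tau> x y' $ 2)
          + (c * GK \<tau> x y $ 3) * (c * GK \<tau> x y' $ 3) + (c * \<tau>\<^sup>2 * K \<tau> x y) * (c * K \<tau> x y')" for y y'
        by (simp add: w_def inner_vec_def sum_3 power2_eq_square algebra_simps)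
      have "(LINT y:ball b r|lborel. LINT y':ball b' r'|lborel. w x y y')
          = (LINT y:ball b r|lborel. c * GK \<tau> x y $ 1) * (LINT y:ball b' r'|lborel. c * GK \<tau> x y $ 1)
          + (LINT y:ball b r|lborel. c * GK \<tau> x y $ 2) * (LINT y:ball b' r'|lborel. c * GK \<tau> x y $ 2)
          + (LINT y:ball b r|lborel. c * GK \<tau> x y $ 3) * (LINT y:ball b' r'|lborel. c * GK \<tau> x y $ 3)
          + (LINT y:ball b r|lborel. c * \<tau>\<^sup>2 * K \<tau> x y) * (LINT y:ball b' r'|lborel. c * K \<tau> x y)"
        unfolding pw by (rule split4) (intro iG1 iG2 iK1 iK2)+
      then show ?thesis
        unfolding grad_vpot[OF xc(1)] grad_vpot[OF xc(2)]
        by (simp add: vpot_eq inner_vec_def sum_3 c_def mult.assoc[symmetric])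
    qed
    have bnd_pw: "w x y y' \<ge> C * \<tau>\<^sup>2 * e x y y'" if x: "x \<in> D" and y: "y \<in> ball b r" and y': "y' \<in> ball b' r'" for x y y'
    proof -
      have p: "((x, y), y') \<in> KK" unfolding KK_def using x y y' Dsub by auto
      have "GK \<tau> x y \<bullet> GK \<tau> x y' + \<tau>\<^sup>2 * K \<tau> x y * K \<tau> x y'
         \<ge> \<delta> / 4 / R0\<^sup>2 * \<tau>\<^sup>2 * exp (- \<tau> * (dist x y + dist x y'))"
      proof (rule key_vec[OF _ _ _ _ d0 _ \<delta>])
        show "d0 \<le> dist x y" "d0 \<le> dist x y'" using hd0[OF p] by auto
        show "dist x y \<le> R0" "dist x y' \<le> R0" using hR0[OF p] by auto
        show "-1 + \<delta> \<le> (x - y) \<bullet> (x - y') / (dist x y * dist x y')"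
          using hm[OF p] by (simp add: \<delta>_def)
        show "4 / (\<delta> * d0) \<le> \<tau>" using t by (simp add: \<tau>0_def)
      qed
      then have "c\<^sup>2 * (GK \<tau> x y \<bullet> GK \<tau> x y' + \<tau>\<^sup>2 * K \<tau> x y * K \<tau> x y')
          \<ge> c\<^sup>2 * (\<delta> / 4 / R0\<^sup>2 * \<tau>\<^sup>2 * exp (- \<tau> * (dist x y + dist x y')))"
        by (intro mult_left_mono) auto
      then show ?thesis
        by (simp add: w_def e_def C_def c_def phi_def dist_commute algebra_simps)
    qed
    have bnd: "(LINT y:ball b r|lborel. LINT y':ball b' r'|lborel. w x y y')
        \<ge> C * \<tau>\<^sup>2 * (LINT y:ball b r|lborel. LINT y':ball b' r'|lborel. e x y y')" if x: "x \<in> D" for x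
    proof -
      have xc: "x \<in> closure D" using x Dsub by auto
      have "(LINT y:ball b r|lborel. C * \<tau>\<^sup>2 * (LINT y':ball b' r'|lborel. e x y y'))
          \<le> (LINT y:ball b r|lborel. LINT y':ball b' r'|lborel. w x y y')"
      proof (rule set_integral_mono)
        show "set_integrable lborel (ball b r) (\<lambda>y. C * \<tau>\<^sup>2 * (LINT y':ball b' r'|lborel. e x y y'))"
          using NE(3)[OF xc] by (intro set_integrable_mult_right) auto
        show "set_integrable lborel (ball b r) (\<lambda>y. LINT y':ball b' r'|lborel. w x y y')"
          using NW(3)[OF xc] .
        fix y assume y: "y \<in> ball b r"
        have yc: "y \<in> cball b r" using y by auto
        have "(LINT y':ball b' r'|lborel. C * \<tau>\<^sup>2 * e x y y') \<le> (LINT y':ball b' r'|lborel. w x y y')"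
        proof (rule set_integral_mono)
          show "set_integrable lborel (ball b' r') (\<lambda>y'. C * \<tau>\<^sup>2 * e x y y')"
            using NE(1)[OF xc yc] by (intro set_integrable_mult_right) auto
          show "set_integrable lborel (ball b' r') (w x y)" using NW(1)[OF xc yc] .
        qed (use bnd_pw[OF x y] in auto)
        then show "C * \<tau>\<^sup>2 * (LINT y':ball b' r'|lborel. e x y y') \<le> (LINT y':ball b' r'|lborel. w x y y')"
          by simp
      qed
      then show ?thesis by simp
    qed
    have Epos: "(LINT y:ball b r|lborel. LINT y':ball b' r'|lborel. e x y y') > 0" if x: "x \<in> D" for x
    proof -
      have xc: "x \<in> closure D" using x Dsub by auto
      have ipos: "(LINT y':ball b' r'|lborel. e x y y') > 0" if "y \<in> cball b r" for y
      proof (rule int_pos)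
        show "open (ball b' r')" "ball b' r' \<noteq> {}" using r' by auto
        show "continuous_on (ball b' r') (e x y)" unfolding e_def phi_def by (intro continuous_intros)
        show "e x y y' > 0" for y' by (simp add: e_def)
        show "set_integrable lborel (ball b' r') (e x y)" using NE(1)[OF xc that] .
      qed
      show ?thesis
      proof (rule int_pos)
        show "open (ball b r)" "ball b r \<noteq> {}" using r by auto
        show "continuous_on (ball b r) (\<lambda>y. LINT y':ball b' r'|lborel. e x y y')"
          using continuous_on_subset[OF NE(2)[OF xc] ball_subset_cball] .
        show "(LINT y':ball b' r'|lborel. e x y y') > 0" if "y \<in> ball b r" for y
          using ipos that by auto
        show "set_integrable lborel (ball b r) (\<lambda>y. LINT y':ball b' r'|lborel. e x y y')"
          using NE(3)[OF xc] .
      qed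
    qed
    have Jeq: "Jfun \<tau> D (indicator (ball b r)) (indicator (ball b' r'))
        = (LINT x:D|lborel. LINT y:ball b r|lborel. LINT y':ball b' r'|lborel. w x y y')"
      unfolding Jfun_def by (rule set_lebesgue_integral_cong[OF Dsets]) (use eqJ in auto)
    have intW: "set_integrable lborel D (\<lambda>x. LINT y:ball b r|lborel. LINT y':ball b' r'|lborel. w x y y')"
      by (rule cont_set_integrable[OF cD NW(4) Dsub Dsets])
    have intE: "set_integrable lborel D (\<lambda>x. LINT y:ball b r|lborel. LINT y':ball b' r'|lborel. e x y y')"
      by (rule cont_set_integrable[OF cD NE(4) Dsub Dsets])
    have Ipos: "(LINT x:D|lborel. LINT y:ball b r|lborel. LINT y':ball b' r'|lborel. e x y y') > 0"
      by (rule int_pos[OF oD neD continuous_on_subset[OF NE(4) Dsub] Epos intE])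
    have "(LINT x:D|lborel. C * \<tau>\<^sup>2 * (LINT y:ball b r|lborel. LINT y':ball b' r'|lborel. e x y y'))
        \<le> (LINT x:D|lborel. LINT y:ball b r|lborel. LINT y':ball b' r'|lborel. w x y y')"
      by (rule set_integral_mono) (use intE intW bnd in auto)
    then have ge: "Jfun \<tau> D (indicator (ball b r)) (indicator (ball b' r'))
        \<ge> C * \<tau>\<^sup>2 * (LINT x:D|lborel. LINT y:ball b r|lborel. LINT y':ball b' r'|lborel. e x y y')"
      unfolding Jeq by simp
    have "C * \<tau>\<^sup>2 * (LINT x:D|lborel. LINT y:ball b r|lborel. LINT y':ball b' r'|lborel. e x y y') > 0"
      using C tpos Ipos by simp
    then show ?thesis using ge unfolding e_def by simp
  qed
  show ?thesis using C t0 main by blast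
qed

end
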